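(* Let $\alpha$ be a unit speed Frenet curve in $\mathbb{E}^3$ with curvature $\kappa>0$ and torsion $\tau$, and let $\beta$ be an osculating mate of $\alpha$ with curvature $\bar\kappa$ and torsion $\bar\tau$. Then $$\kappa=\frac{\varepsilon_1\bar\kappa^2}{\bar\kappa^2+\bar\tau^2}\left(\frac{\bar\tau}{\bar\kappa}\right)',\qquad \tau=\pm\sqrt{\bar\kappa^2+\bar\tau^2}.$$
   Context: $\alpha:I\to\mathbb{E}^3$ is parametrized by arclength $s$, with Frenet frame $\{T,N,B\}$, $T'=\kappa N$, $N'=-\kappa T+\tau B$, $B'=-\tau N$. An osculating mate of $\alpha$ is a curve $\beta(s)=\int(x_1T+x_2N)ds$ with smooth $x_1,x_2$, $x_1^2+x_2^2=1$ and $\beta''\perp\mathrm{span}\{T,N\}$; $\beta$ is assumed to be a Frenet curve (nonvanishing curvature), unit speed in $s$, with Frenet apparatus $\{\bar T,\bar N,\bar B,\bar\kappa,\bar\tau\}$. Then $\beta'=\sin\theta\,T+\cos\theta\,N$ for an antiderivative $\theta=\int\kappa ds$ of $\kappa$, and $\varepsilon_1\in\{\pm1\}$ denotes the sign with $\varepsilon_1\tau\cos\theta>0$. The prime denotes $d/ds$. *)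

theory Defs
  imports "HOL-Analysis.Analysis" "HOL-Analysis.Cross3"
begin

definition frenet_apparatus ::
  "real set \<Rightarrow> (real \<Rightarrow> real^3) \<Rightarrow> (real \<Rightarrow> real^3) \<Rightarrow> (real \<Rightarrow> real^3) \<Rightarrow> (real \<Rightarrow> real^3)
    \<Rightarrow> (real \<Rightarrow> real) \<Rightarrow> (real \<Rightarrow> real) \<Rightarrow> bool" where
  "frenet_apparatus I \<gamma> T N B \<kappa> \<tau> \<longleftrightarrow>
     (\<forall>s\<in>I.
        (\<gamma> has_vector_derivative T s) (at s) \<and>
        (T has_vector_derivative (\<kappa> s *\<^sub>R N s)) (at s) \<and>
        (N has_vector_derivative (- \<kappa> s *\<^sub>R T s + \<tau> s *\<^sub>R B s)) (at s) \<and>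
        (B has_vector_derivative (- \<tau> s *\<^sub>R N s)) (at s) \<and>
        norm (T s) = 1 \<and> norm (N s) = 1 \<and> inner (T s) (N s) = 0 \<and>
        B s = cross3 (T s) (N s) \<and>
        \<kappa> s > 0)"

end

theory Submission
  imports Defs
begin

lemma cross_triple: "cross3 (x::real^3) (cross3 y z) = (x \<bullet> z) *\<^sub>R y - (x \<bullet> y) *\<^sub>R z"
  by (simp add: cross3_simps forall_3)

lemma frame_facts:
  fixes T N :: "real^3"
  assumes "norm T = 1" "norm N = 1" "T \<bullet> N = 0"
  shows "cross3 T (cross3 T N) = - N" "cross3 N (cross3 T N) = T"
    "T \<bullet> cross3 T N = 0" "N \<bullet> cross3 T N = 0" "cross3 T N \<bullet> cross3 T N = 1"
    "T \<bullet> T = 1" "N \<bullet> N = 1" "N \<bullet> T = 0"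
proof -
  have tt: "T \<bullet> T = 1" "N \<bullet> N = 1" using assms by (simp_all add: dot_square_norm)
  show "cross3 T (cross3 T N) = - N" "cross3 N (cross3 T N) = T"
    using tt assms(3) by (simp_all add: cross_triple inner_commute)
  show "T \<bullet> cross3 T N = 0" "N \<bullet> cross3 T N = 0" by (simp_all add: dot_cross_self)
  have "(norm (cross3 T N))\<^sup>2 = 1" using norm_cross_dot[of T N] assms by simp
  then show "cross3 T N \<bullet> cross3 T N = 1" by (simp add: power2_norm_eq_inner)
  show "T \<bullet> T = 1" "N \<bullet> N = 1" "N \<bullet> T = 0" using tt assms(3) by (simp_all add: inner_commute)
qed

lemma pointwise:
  fixes T N B Tb Nb Bb \<beta> :: "real \<Rightarrow> real^3" and \<alpha> :: "real \<Rightarrow> real^3"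
    and \<kappa> \<tau> \<kappa>b \<tau>b \<theta> :: "real \<Rightarrow> real"
  assumes fa: "frenet_apparatus I \<alpha> T N B \<kappa> \<tau>"
    and fb: "frenet_apparatus I \<beta> Tb Nb Bb \<kappa>b \<tau>b"
    and I: "open I" and u: "u \<in> I"
    and dt: "\<tau> differentiable (at u)" and dk: "\<kappa>b differentiable (at u)"
    and th: "\<forall>s\<in>I. (\<theta> has_real_derivative \<kappa> s) (at s) \<and>
        (\<beta> has_vector_derivative (sin (\<theta> s) *\<^sub>R T s + cos (\<theta> s) *\<^sub>R N s)) (at s)"
  shows "(\<kappa>b u)\<^sup>2 = (\<tau> u * cos (\<theta> u))\<^sup>2 \<and> (\<kappa>b u)\<^sup>2 * \<tau>b u = \<tau> u ^ 3 * (cos (\<theta> u))\<^sup>2 * sin (\<theta> u)"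
proof -
  have Tb: "Tb v = sin (\<theta> v) *\<^sub>R T v + cos (\<theta> v) *\<^sub>R N v" if "v \<in> I" for v
    using fb th that unfolding frenet_apparatus_def by (meson vector_derivative_unique_at)
  have d1: "((\<lambda>w. sin (\<theta> w) *\<^sub>R T w + cos (\<theta> w) *\<^sub>R N w) has_vector_derivative
      (\<tau> v * cos (\<theta> v)) *\<^sub>R B v) (at v)" if v: "v \<in> I" for v
  proof -
    have a: "(T has_vector_derivative (\<kappa> v *\<^sub>R N v)) (at v)"
        "(N has_vector_derivative (- \<kappa> v *\<^sub>R T v + \<tau> v *\<^sub>R B v)) (at v)"
      using fa v unfolding frenet_apparatus_def by auto
    have t: "(\<theta> has_real_derivative \<kappa> v) (at v)" using th v by auto
    have "((\<lambda>w. sin (\<theta> w) *\<^sub>R T w + cos (\<theta> w) *\<^sub>R N w) has_vector_derivative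
      (sin (\<theta> v) *\<^sub>R (\<kappa> v *\<^sub>R N v) + (cos (\<theta> v) * \<kappa> v) *\<^sub>R T v)
      + (cos (\<theta> v) *\<^sub>R (- \<kappa> v *\<^sub>R T v + \<tau> v *\<^sub>R B v) + (- sin (\<theta> v) * \<kappa> v) *\<^sub>R N v)) (at v)"
      by (intro has_vector_derivative_add has_vector_derivative_scaleR a
          DERIV_chain2[OF DERIV_sin t] DERIV_chain2[OF DERIV_cos t])
    moreover have "(sin (\<theta> v) *\<^sub>R (\<kappa> v *\<^sub>R N v) + (cos (\<theta> v) * \<kappa> v) *\<^sub>R T v)
      + (cos (\<theta> v) *\<^sub>R (- \<kappa> v *\<^sub>R T v + \<tau> v *\<^sub>R B v) + (- sin (\<theta> v) * \<kappa> v) *\<^sub>R N v)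
      = (\<tau> v * cos (\<theta> v)) *\<^sub>R B v"
      by (simp add: algebra_simps)
    ultimately show ?thesis by simp
  qed
  have e1: "\<kappa>b v *\<^sub>R Nb v = (\<tau> v * cos (\<theta> v)) *\<^sub>R B v" if v: "v \<in> I" for v
  proof -
    have "(Tb has_vector_derivative (\<tau> v * cos (\<theta> v)) *\<^sub>R B v) (at v)"
      by (rule has_vector_derivative_transform_within_open[OF d1[OF v] I v]) (simp add: Tb)
    moreover have "(Tb has_vector_derivative \<kappa>b v *\<^sub>R Nb v) (at v)"
      using fb v unfolding frenet_apparatus_def by auto
    ultimately show ?thesis by (meson vector_derivative_unique_at)
  qed
  obtain k' where k': "(\<kappa>b has_real_derivative k') (at u)"
    using dk by (auto simp: real_differentiable_def)
  obtain t' where t': "(\<tau> has_real_derivative t') (at u)"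
    using dt by (auto simp: real_differentiable_def)
  have au: "(T has_vector_derivative (\<kappa> u *\<^sub>R N u)) (at u)"
        "(N has_vector_derivative (- \<kappa> u *\<^sub>R T u + \<tau> u *\<^sub>R B u)) (at u)"
        "(B has_vector_derivative (- \<tau> u *\<^sub>R N u)) (at u)"
        "norm (T u) = 1" "norm (N u) = 1" "T u \<bullet> N u = 0" "B u = cross3 (T u) (N u)"
      using fa u unfolding frenet_apparatus_def by auto
  have bu: "(Nb has_vector_derivative (- \<kappa>b u *\<^sub>R Tb u + \<tau>b u *\<^sub>R Bb u)) (at u)"
        "norm (Tb u) = 1" "norm (Nb u) = 1" "Tb u \<bullet> Nb u = 0" "Bb u = cross3 (Tb u) (Nb u)"
        "\<kappa>b u > 0"
      using fb u unfolding frenet_apparatus_def by auto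
  have tu: "(\<theta> has_real_derivative \<kappa> u) (at u)" using th u by auto
  have L: "((\<lambda>w. \<kappa>b w *\<^sub>R Nb w) has_vector_derivative
     \<kappa>b u *\<^sub>R (- \<kappa>b u *\<^sub>R Tb u + \<tau>b u *\<^sub>R Bb u) + k' *\<^sub>R Nb u) (at u)"
    by (intro has_vector_derivative_scaleR k' bu(1))
  have R: "((\<lambda>w. (\<tau> w * cos (\<theta> w)) *\<^sub>R B w) has_vector_derivative
     (\<tau> u * cos (\<theta> u)) *\<^sub>R (- \<tau> u *\<^sub>R N u) + (t' * cos (\<theta> u) + \<tau> u * (- sin (\<theta> u) * \<kappa> u)) *\<^sub>R B u) (at u)"
  proof -
    have "((\<lambda>w. \<tau> w * cos (\<theta> w)) has_real_derivative t' * cos (\<theta> u) + \<tau> u * (- sin (\<theta> u) * \<kappa> u)) (at u)"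
      using DERIV_mult[OF t' DERIV_chain2[OF DERIV_cos tu]] by (simp add: algebra_simps)
    then show ?thesis by (intro has_vector_derivative_scaleR au(3))
  qed
  have R': "((\<lambda>w. \<kappa>b w *\<^sub>R Nb w) has_vector_derivative
     (\<tau> u * cos (\<theta> u)) *\<^sub>R (- \<tau> u *\<^sub>R N u) + (t' * cos (\<theta> u) + \<tau> u * (- sin (\<theta> u) * \<kappa> u)) *\<^sub>R B u) (at u)"
    by (rule has_vector_derivative_transform_within_open[OF R I u]) (simp add: e1)
  have E: "\<kappa>b u *\<^sub>R (- \<kappa>b u *\<^sub>R Tb u + \<tau>b u *\<^sub>R Bb u) + k' *\<^sub>R Nb u =
     (\<tau> u * cos (\<theta> u)) *\<^sub>R (- \<tau> u *\<^sub>R N u) + (t' * cos (\<theta> u) + \<tau> u * (- sin (\<theta> u) * \<kappa> u)) *\<^sub>R B u"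
    using L R' by (meson vector_derivative_unique_at)
  note fa' = frame_facts[OF au(4,5,6), folded au(7)]
  note fb' = frame_facts[OF bu(2,3,4), folded bu(5)]
  have TbT: "Tb u = sin (\<theta> u) *\<^sub>R T u + cos (\<theta> u) *\<^sub>R N u" using Tb u .
  have BT: "B u \<bullet> T u = 0" "B u \<bullet> N u = 0" using fa' by (simp_all add: inner_commute)
  have i1: "Tb u \<bullet> N u = cos (\<theta> u)" "Tb u \<bullet> B u = 0"
    using fa' au(6) by (simp_all add: TbT inner_add_left)
  have kBb: "\<kappa>b u *\<^sub>R Bb u = (\<tau> u * cos (\<theta> u)) *\<^sub>R (cos (\<theta> u) *\<^sub>R T u - sin (\<theta> u) *\<^sub>R N u)"
  proof -
    have "\<kappa>b u *\<^sub>R Bb u = cross3 (Tb u) (\<kappa>b u *\<^sub>R Nb u)" by (simp add: bu(5) cross_mult_right)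
    also have "\<dots> = (\<tau> u * cos (\<theta> u)) *\<^sub>R cross3 (sin (\<theta> u) *\<^sub>R T u + cos (\<theta> u) *\<^sub>R N u) (B u)"
      by (simp add: e1[OF u] TbT cross_mult_right)
    also have "\<dots> = (\<tau> u * cos (\<theta> u)) *\<^sub>R (cos (\<theta> u) *\<^sub>R T u - sin (\<theta> u) *\<^sub>R N u)"
      using fa' by (simp add: cross_add_left cross_mult_left au(7) algebra_simps)
    finally show ?thesis .
  qed
  have i2: "\<kappa>b u * (Bb u \<bullet> B u) = 0" "\<kappa>b u * (Bb u \<bullet> N u) = - \<tau> u * cos (\<theta> u) * sin (\<theta> u)"
  proof -
    have "\<kappa>b u * (Bb u \<bullet> B u) = (\<kappa>b u *\<^sub>R Bb u) \<bullet> B u" by simp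
    then show "\<kappa>b u * (Bb u \<bullet> B u) = 0" using kBb fa' by (simp add: inner_diff_left)
    have "\<kappa>b u * (Bb u \<bullet> N u) = (\<kappa>b u *\<^sub>R Bb u) \<bullet> N u" by simp
    then show "\<kappa>b u * (Bb u \<bullet> N u) = - \<tau> u * cos (\<theta> u) * sin (\<theta> u)"
      using kBb fa' au(6) by (simp add: inner_diff_left)
  qed
  have E1: "(\<kappa>b u *\<^sub>R (- \<kappa>b u *\<^sub>R Tb u + \<tau>b u *\<^sub>R Bb u) + k' *\<^sub>R Nb u) \<bullet> Tb u =
     ((\<tau> u * cos (\<theta> u)) *\<^sub>R (- \<tau> u *\<^sub>R N u) + (t' * cos (\<theta> u) + \<tau> u * (- sin (\<theta> u) * \<kappa> u)) *\<^sub>R B u) \<bullet> Tb u"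
    using E by simp
  have f1: "Tb u \<bullet> Tb u = 1" "Bb u \<bullet> Tb u = 0" "Nb u \<bullet> Tb u = 0" "N u \<bullet> Tb u = cos (\<theta> u)"
    "B u \<bullet> Tb u = 0" "Tb u \<bullet> Bb u = 0" "Bb u \<bullet> Bb u = 1" "Nb u \<bullet> Bb u = 0"
    using fb' i1 by (simp_all add: inner_commute)
  have "- (\<kappa>b u * \<kappa>b u) = - (\<tau> u * cos (\<theta> u) * \<tau> u * cos (\<theta> u))"
    using E1 unfolding inner_add_left inner_scaleR_left inner_minus_left f1 by simp
  then have c1: "(\<kappa>b u)\<^sup>2 = (\<tau> u * cos (\<theta> u))\<^sup>2" by (simp add: power2_eq_square algebra_simps)
  have E2: "(\<kappa>b u *\<^sub>R (- \<kappa>b u *\<^sub>R Tb u + \<tau>b u *\<^sub>R Bb u) + k' *\<^sub>R Nb u) \<bullet> Bb u =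
     ((\<tau> u * cos (\<theta> u)) *\<^sub>R (- \<tau> u *\<^sub>R N u) + (t' * cos (\<theta> u) + \<tau> u * (- sin (\<theta> u) * \<kappa> u)) *\<^sub>R B u) \<bullet> Bb u"
    using E by simp
  have f2: "N u \<bullet> Bb u = Bb u \<bullet> N u" "B u \<bullet> Bb u = Bb u \<bullet> B u" by (simp_all add: inner_commute)
  have "\<kappa>b u * \<tau>b u = - (\<tau> u * cos (\<theta> u) * \<tau> u * (Bb u \<bullet> N u)) + (t' * cos (\<theta> u) + \<tau> u * (- sin (\<theta> u) * \<kappa> u)) * (Bb u \<bullet> B u)"
    (is ?A)
    using E2 unfolding inner_add_left inner_scaleR_left inner_minus_left f1 f2 by simp
  then have "\<kappa>b u * (\<kappa>b u * \<tau>b u) = - (\<tau> u * cos (\<theta> u) * \<tau> u * (\<kappa>b u * (Bb u \<bullet> N u))) + (t' * cos (\<theta> u) + \<tau> u * (- sin (\<theta> u) * \<kappa> u)) * (\<kappa>b u * (Bb u \<bullet> B u))"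
  proof -
    assume h: ?A
    have "\<kappa>b u * (\<kappa>b u * \<tau>b u) = \<kappa>b u * (- (\<tau> u * cos (\<theta> u) * \<tau> u * (Bb u \<bullet> N u)) + (t' * cos (\<theta> u) + \<tau> u * (- sin (\<theta> u) * \<kappa> u)) * (Bb u \<bullet> B u))"
      by (subst h) simp
    then show ?thesis by (simp add: algebra_simps)
  qed
  then have c2: "(\<kappa>b u)\<^sup>2 * \<tau>b u = \<tau> u ^ 3 * (cos (\<theta> u))\<^sup>2 * sin (\<theta> u)"
    unfolding i2 by (simp add: power2_eq_square power3_eq_cube algebra_simps)
  show ?thesis using c1 c2 by simp
qed

lemma arith_final:
  fixes vkb ve vt vc vs vk vkp vtp vtb :: real
  assumes "vkb > 0" "vkb = ve* vt* vc" "ve* ve = 1" "vkb* vkp = vt* vc*(vtp* vc - vt* vs* vk)" "vc* vc+vs* vs=1" "vtb = vt* vs"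
  shows "vk = ve* vkb\<^sup>2/(vkb\<^sup>2+vtb\<^sup>2) * (((vtp * vs + vt * (vc * vk)) * vkb - vt * vs * vkp) / (vkb * vkb))"
proof -
  have vt0: "vt \<noteq> 0" "vc \<noteq> 0" using assms by auto
  have sq: "vkb\<^sup>2+vtb\<^sup>2 = vt* vt"
  proof -
    have "vkb\<^sup>2+vtb\<^sup>2 = (ve* ve)*(vt* vt)*(vc* vc) + vt* vt*(vs* vs)" using assms(2,6) by (simp add: power2_eq_square algebra_simps)
    also have "\<dots> = vt* vt*(vc* vc+vs* vs)" using assms(3) by (simp add: algebra_simps)
    finally show ?thesis using assms(5) by simp
  qed
  have kk: "vkb* vkb = vt* vt* vc* vc*(ve* ve)" using assms(2) by (simp add: algebra_simps)
  have num: "vkb * ((vtp * vs + vt * (vc * vk)) * vkb - vt * vs * vkp) = vt* vt* vt* vc* vk"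
  proof -
    have "vkb * ((vtp * vs + vt * (vc * vk)) * vkb - vt * vs * vkp) = (vtp * vs + vt * (vc * vk)) * (vkb* vkb) - vt * vs * (vkb* vkp)"
      by (simp add: algebra_simps)
    also have "\<dots> = (vtp * vs + vt * (vc * vk)) * (vt* vt* vc* vc*(ve* ve)) - vt * vs * (vt* vc*(vtp* vc - vt* vs* vk))"
      using assms(4) kk by simp
    also have "\<dots> = vt* vt* vt* vc* vk*(vc* vc+vs* vs)" using assms(3) by (simp add: algebra_simps)
    finally show ?thesis using assms(5) by simp
  qed
  have "ve* vkb\<^sup>2/(vkb\<^sup>2+vtb\<^sup>2) * (((vtp * vs + vt * (vc * vk)) * vkb - vt * vs * vkp) / (vkb * vkb))
      = ve * (vkb * ((vtp * vs + vt * (vc * vk)) * vkb - vt * vs * vkp)) / (vt* vt* vkb)"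
    unfolding sq using assms(1) vt0 by (simp add: field_simps power2_eq_square)
  also have "\<dots> = ve* vt* vc* vk/vkb" unfolding num using vt0 assms(1) by (simp add: field_simps)
  also have "\<dots> = vk" using assms(1,2) by (metis nonzero_mult_div_cancel_left order_less_irrefl mult.commute)
  finally show ?thesis by simp
qed
theorem theorem4:
  fixes a b :: real
    and \<alpha> T N B \<beta> Tb Nb Bb :: "real \<Rightarrow> real^3"
    and \<kappa> \<tau> \<kappa>b \<tau>b x1 x2 \<theta> \<epsilon>1 :: "real \<Rightarrow> real"
  assumes "a < b"
    and frenet_alpha: "frenet_apparatus {a<..<b} \<alpha> T N B \<kappa> \<tau>"
    and smooth_alpha: "\<forall>s\<in>{a<..<b}. \<kappa> differentiable (at s) \<and> \<tau> differentiable (at s)"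
    and mate_deriv: "\<forall>s\<in>{a<..<b}. (\<beta> has_vector_derivative (x1 s *\<^sub>R T s + x2 s *\<^sub>R N s)) (at s)"
    and x_smooth: "\<forall>s\<in>{a<..<b}. x1 differentiable (at s) \<and> x2 differentiable (at s)"
    and x_unit: "\<forall>s\<in>{a<..<b}. (x1 s)\<^sup>2 + (x2 s)\<^sup>2 = 1"
    and osc: "\<forall>s\<in>{a<..<b}.
        inner (vector_derivative (\<lambda>u. x1 u *\<^sub>R T u + x2 u *\<^sub>R N u) (at s)) (T s) = 0 \<and>
        inner (vector_derivative (\<lambda>u. x1 u *\<^sub>R T u + x2 u *\<^sub>R N u) (at s)) (N s) = 0"
    and frenet_beta: "frenet_apparatus {a<..<b} \<beta> Tb Nb Bb \<kappa>b \<tau>b"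
    and smooth_beta: "\<forall>s\<in>{a<..<b}. \<kappa>b differentiable (at s) \<and> \<tau>b differentiable (at s)"
    and theta: "\<forall>s\<in>{a<..<b}. (\<theta> has_real_derivative \<kappa> s) (at s) \<and>
        (\<beta> has_vector_derivative (sin (\<theta> s) *\<^sub>R T s + cos (\<theta> s) *\<^sub>R N s)) (at s)"
    and eps: "\<forall>s\<in>{a<..<b}. (\<epsilon>1 s = 1 \<or> \<epsilon>1 s = -1) \<and> \<epsilon>1 s * \<tau> s * cos (\<theta> s) > 0"
  shows "\<forall>s\<in>{a<..<b}.
           \<kappa> s = \<epsilon>1 s * (\<kappa>b s)\<^sup>2 / ((\<kappa>b s)\<^sup>2 + (\<tau>b s)\<^sup>2) * deriv (\<lambda>u. \<tau>b u / \<kappa>b u) s \<and>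
           (\<tau> s = sqrt ((\<kappa>b s)\<^sup>2 + (\<tau>b s)\<^sup>2) \<or> \<tau> s = - sqrt ((\<kappa>b s)\<^sup>2 + (\<tau>b s)\<^sup>2))"
  proof
  fix s assume sI: "s \<in> {a<..<b}"
  let ?I = "{a<..<b::real}"
  have P: "(\<kappa>b u)\<^sup>2 = (\<tau> u * cos (\<theta> u))\<^sup>2 \<and> (\<kappa>b u)\<^sup>2 * \<tau>b u = \<tau> u ^ 3 * (cos (\<theta> u))\<^sup>2 * sin (\<theta> u)"
    if u: "u \<in> ?I" for u
    using pointwise[OF frenet_alpha frenet_beta open_greaterThanLessThan u] smooth_alpha smooth_beta theta u by blast
  have nz: "\<tau> u \<noteq> 0" "cos (\<theta> u) \<noteq> 0" "\<kappa>b u > 0" if u: "u \<in> ?I" for u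
  proof -
    have "\<epsilon>1 u * \<tau> u * cos (\<theta> u) > 0" using eps u by auto
    moreover have "\<kappa>b u > 0" using u frenet_beta unfolding frenet_apparatus_def by auto
    ultimately show "\<tau> u \<noteq> 0" "cos (\<theta> u) \<noteq> 0" "\<kappa>b u > 0" by auto
  qed
  have tb: "\<tau>b u = \<tau> u * sin (\<theta> u)" if u: "u \<in> ?I" for u
  proof -
    have "(\<tau> u * cos (\<theta> u))\<^sup>2 * \<tau>b u = (\<tau> u * cos (\<theta> u))\<^sup>2 * (\<tau> u * sin (\<theta> u))"
    proof -
      have "(\<tau> u * cos (\<theta> u))\<^sup>2 * \<tau>b u = (\<kappa>b u)\<^sup>2 * \<tau>b u" by (simp only: conjunct1[OF P[OF u]])
      also have "\<dots> = \<tau> u ^ 3 * (cos (\<theta> u))\<^sup>2 * sin (\<theta> u)" by (rule conjunct2[OF P[OF u]])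
      also have "\<dots> = (\<tau> u * cos (\<theta> u))\<^sup>2 * (\<tau> u * sin (\<theta> u))"
        by (simp add: power2_eq_square power3_eq_cube algebra_simps)
      finally show ?thesis .
    qed
    then show ?thesis using nz[OF u] by simp
  qed
  have e0: "\<epsilon>1 s = 1 \<or> \<epsilon>1 s = -1" "\<epsilon>1 s * \<tau> s * cos (\<theta> s) > 0" using eps sI by auto
  have e: "\<epsilon>1 s * \<epsilon>1 s = 1" "\<epsilon>1 s * \<tau> s * cos (\<theta> s) > 0" using e0 by auto
  have kb: "\<kappa>b s = \<epsilon>1 s * \<tau> s * cos (\<theta> s)"
  proof -
    have "(\<kappa>b s)\<^sup>2 = (\<epsilon>1 s * \<tau> s * cos (\<theta> s))\<^sup>2"
      using P[OF sI] e(1) by (simp add: power2_eq_square algebra_simps)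
    then show ?thesis using nz(3)[OF sI] e(2) by (simp add: power2_eq_iff_nonneg)
  qed
  have sq: "(\<kappa>b s)\<^sup>2 + (\<tau>b s)\<^sup>2 = (\<tau> s)\<^sup>2"
  proof -
    have "(\<kappa>b s)\<^sup>2 + (\<tau>b s)\<^sup>2 = (\<tau> s)\<^sup>2 * ((cos (\<theta> s))\<^sup>2 + (sin (\<theta> s))\<^sup>2)"
    proof -
      have "(\<kappa>b s)\<^sup>2 + (\<tau>b s)\<^sup>2 = (\<tau> s * cos (\<theta> s))\<^sup>2 + (\<tau> s * sin (\<theta> s))\<^sup>2"
        by (simp only: conjunct1[OF P[OF sI]] tb[OF sI])
      also have "\<dots> = (\<tau> s)\<^sup>2 * ((cos (\<theta> s))\<^sup>2 + (sin (\<theta> s))\<^sup>2)"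
        by (simp only: power_mult_distrib distrib_left)
      finally show ?thesis .
    qed
    then show ?thesis by simp
  qed
  have part2: "\<tau> s = sqrt ((\<kappa>b s)\<^sup>2 + (\<tau>b s)\<^sup>2) \<or> \<tau> s = - sqrt ((\<kappa>b s)\<^sup>2 + (\<tau>b s)\<^sup>2)"
    unfolding sq by (cases "\<tau> s \<ge> 0") auto
  obtain k' where k': "(\<kappa>b has_real_derivative k') (at s)"
    using smooth_beta sI unfolding real_differentiable_def by (meson greaterThanLessThan_iff)
  obtain t' where t': "(\<tau> has_real_derivative t') (at s)"
    using smooth_alpha sI unfolding real_differentiable_def by (meson greaterThanLessThan_iff)
  have th: "(\<theta> has_real_derivative \<kappa> s) (at s)" using theta sI by auto
  have kk: "\<kappa>b s * k' = \<tau> s * cos (\<theta> s) * (t' * cos (\<theta> s) - \<tau> s * sin (\<theta> s) * \<kappa> s)"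
  proof -
    have d1: "((\<lambda>u. (\<kappa>b u)^2) has_real_derivative of_nat 2 * (k' * \<kappa>b s ^ (2 - Suc 0))) (at s)"
      by (rule DERIV_power[OF k'])
    have d2: "((\<lambda>u. (\<tau> u * cos (\<theta> u))^2) has_real_derivative
        of_nat 2 * ((\<tau> s * (- sin (\<theta> s) * \<kappa> s) + t' * cos (\<theta> s)) * (\<tau> s * cos (\<theta> s)) ^ (2 - Suc 0))) (at s)"
      by (rule DERIV_power[OF DERIV_mult'[OF t' DERIV_chain2[OF DERIV_cos th]]])
    have d2': "((\<lambda>u. (\<kappa>b u)^2) has_real_derivative
        of_nat 2 * ((\<tau> s * (- sin (\<theta> s) * \<kappa> s) + t' * cos (\<theta> s)) * (\<tau> s * cos (\<theta> s)) ^ (2 - Suc 0))) (at s)"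
      by (rule has_field_derivative_transform_within_open[OF d2 open_greaterThanLessThan sI]) (simp add: P)
    have "of_nat 2 * (k' * \<kappa>b s ^ (2 - Suc 0)) = of_nat 2 * ((\<tau> s * (- sin (\<theta> s) * \<kappa> s) + t' * cos (\<theta> s)) * (\<tau> s * cos (\<theta> s)) ^ (2 - Suc 0))"
      using DERIV_unique[OF d1 d2'] .
    then show ?thesis by (simp add: algebra_simps)
  qed
  have dg: "((\<lambda>u. \<tau> u * sin (\<theta> u) / \<kappa>b u) has_real_derivative
      ((t' * sin (\<theta> s) + \<tau> s * (cos (\<theta> s) * \<kappa> s)) * \<kappa>b s - \<tau> s * sin (\<theta> s) * k') / (\<kappa>b s * \<kappa>b s)) (at s)"
    using DERIV_divide[OF DERIV_mult[OF t' DERIV_chain2[OF DERIV_sin th]] k'] nz(3)[OF sI] by (simp add: mult.commute mult.left_commute)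
  have df: "((\<lambda>u. \<tau>b u / \<kappa>b u) has_real_derivative
      ((t' * sin (\<theta> s) + \<tau> s * (cos (\<theta> s) * \<kappa> s)) * \<kappa>b s - \<tau> s * sin (\<theta> s) * k') / (\<kappa>b s * \<kappa>b s)) (at s)"
    by (rule has_field_derivative_transform_within_open[OF dg open_greaterThanLessThan sI]) (simp add: tb)
  have part1: "\<kappa> s = \<epsilon>1 s * (\<kappa>b s)\<^sup>2 / ((\<kappa>b s)\<^sup>2 + (\<tau>b s)\<^sup>2) * deriv (\<lambda>u. \<tau>b u / \<kappa>b u) s"
    unfolding DERIV_imp_deriv[OF df]
    by (rule arith_final[OF nz(3)[OF sI] kb e(1) kk _ tb[OF sI]]) (simp add: power2_eq_square[symmetric])
  show "\<kappa> s = \<epsilon>1 s * (\<kappa>b s)\<^sup>2 / ((\<kappa>b s)\<^sup>2 + (\<tau>b s)\<^sup>2) * deriv (\<lambda>u. \<tau>b u / \<kappa>b u) s \<and>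
           (\<tau> s = sqrt ((\<kappa>b s)\<^sup>2 + (\<tau>b s)\<^sup>2) \<or> \<tau> s = - sqrt ((\<kappa>b s)\<^sup>2 + (\<tau>b s)\<^sup>2))"
    using part1 part2 by blast
qed

end
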